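(* Let $0<q<1$, $p\ge1$ an integer, $s\in\mathbb{C}$. For every integer $n\ge0$, $$\Big(s\,(D_x^q)^p-q^{p-n}\,x\,D_x^q+q^{p-n}\{n\}_q\Big)\mathcal{H}_{n,p}(x,s|q)=0.$$
   Context: For $m\ge0$: $\{m\}_q=\frac{1-q^m}{1-q}$, $\{m\}_q!=\prod_{j=1}^m\{j\}_q$, $\{0\}_q!=1$. The $q$-derivative is $D_x^qf(x)=\frac{f(x)-f(qx)}{(1-q)x}$. $E_{Q}(y)=\sum_{k\ge0}\frac{Q^{k(k-1)/2}}{\{k\}_Q!}y^k$. The doubly indexed Hermite polynomials are $$\mathcal{H}_{n,p}(x,s|q)=E_{q^p}\!\left(-s\frac{(D_x^q)^p}{\{p\}_q}\right)(x^n)=\sum_{k\ge0}\frac{q^{pk(k-1)/2}}{\{k\}_{q^p}!}\Big(\frac{-s}{\{p\}_q}\Big)^k(D_x^q)^{pk}x^n$$ (a finite sum). *)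

theory Defs
  imports Complex_Main
begin

definition qnum :: "complex \<Rightarrow> nat \<Rightarrow> complex" where
  "qnum q m = (1 - q ^ m) / (1 - q)"

definition qfact :: "complex \<Rightarrow> nat \<Rightarrow> complex" where
  "qfact q m = (\<Prod>j=1..m. qnum q j)"

definition qderiv :: "complex \<Rightarrow> (complex \<Rightarrow> complex) \<Rightarrow> complex \<Rightarrow> complex" where
  "qderiv q f x = (f x - f (q * x)) / ((1 - q) * x)"

text \<open>Doubly indexed q-Hermite polynomial H_{n,p}(x,s|q). The series over k is finite:
  for p >= 1 and k > n the term (D_x^q)^{pk} x^n vanishes, so summing over k <= n
  gives the full sum.\<close>
definition qHermite :: "nat \<Rightarrow> nat \<Rightarrow> complex \<Rightarrow> complex \<Rightarrow> complex \<Rightarrow> complex" where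
  "qHermite n p x s q =
     (\<Sum>k\<le>n. q ^ (p * (k * (k - 1) div 2)) / qfact (q ^ p) k
              * (- s / qnum q p) ^ k
              * ((qderiv q ^^ (p * k)) (\<lambda>y. y ^ n)) x)"

end

theory Submission
  imports Defs
begin

lemma qderiv_sum_iter:
  "(qderiv Q ^^ j) (\<lambda>y. \<Sum>k\<in>A. c k * g k y) = (\<lambda>y. \<Sum>k\<in>A. c k * (qderiv Q ^^ j) (g k) y)"
proof (induction j)
  case 0 then show ?case by simp
next
  case (Suc j)
  show ?case
    unfolding funpow.simps comp_def Suc
    by (rule ext) (simp add: qderiv_def sum_subtractf[symmetric] sum_divide_distrib algebra_simps)
qed

definition ff :: "complex \<Rightarrow> nat \<Rightarrow> nat \<Rightarrow> complex" where
  "ff Q n m = (\<Prod>j<m. qnum Q (n - j))"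

lemma qnum0[simp]: "qnum Q 0 = 0" by (simp add: qnum_def)

lemma ff_zero: "n < m \<Longrightarrow> ff Q n m = 0"
  unfolding ff_def by (rule prod_zero) (auto intro!: bexI[of _ n])

lemma ff_Suc: "ff Q n (Suc m) = ff Q n m * qnum Q (n - m)"
  by (simp add: ff_def)

lemma D1:
  assumes Q: "Q \<noteq> 0" "Q \<noteq> 1"
  shows "x \<noteq> 0 \<Longrightarrow> (qderiv Q ^^ m) (\<lambda>y. y ^ n) x = ff Q n m * x ^ (n - m)"
proof (induction m arbitrary: x)
  case 0 then show ?case by (simp add: ff_def)
next
  case (Suc m)
  have qx: "Q * x \<noteq> 0" using Suc.prems Q by simp
  have "(qderiv Q ^^ Suc m) (\<lambda>y. y ^ n) x
      = (ff Q n m * x ^ (n - m) - ff Q n m * (Q * x) ^ (n - m)) / ((1 - Q) * x)"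
    by (simp add: qderiv_def Suc.IH[OF Suc.prems] Suc.IH[OF qx])
  also have "\<dots> = ff Q n (Suc m) * x ^ (n - Suc m)"
  proof (cases "n - m")
    case 0 then show ?thesis by (simp add: ff_Suc)
  next
    case (Suc r)
    then have "n - Suc m = r" by simp
    moreover have "1 - Q \<noteq> 0" using Q by simp
    ultimately show ?thesis using Suc Suc.prems
      by (simp add: ff_Suc qnum_def field_simps power_mult_distrib)
  qed
  finally show ?case .
qed

lemma tri: "Suc m * m div 2 = m * (m - 1) div 2 + m"
proof -
  have "Suc m * m = m * (m - 1) + 2 * m" by (cases m) (auto simp: algebra_simps)
  then show ?thesis by simp
qed

lemma qfact_Suc: "qfact r (Suc m) = qfact r m * qnum r (Suc m)"
  by (simp add: qfact_def)

lemma alg0: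
  fixes A B R F E D G H u T :: complex
  assumes "A \<noteq> 0" "B \<noteq> 0" "R \<noteq> 0" "F \<noteq> 0" "G \<noteq> 0" "D \<noteq> 0" "H \<noteq> 0"
  shows "A / (R * (A * B)) * (E * B / (F * (D / G)) * u ^ Suc k) * (R * D / H) * T
     = (u * (G / H)) * (E / F * u ^ k) * T"
  using assms by (simp add: field_simps)

lemma alg:
  fixes A B R F E Q s T :: complex
  assumes "A \<noteq> 0" "B \<noteq> 0" "R \<noteq> 0" "F \<noteq> 0" "1 - A \<noteq> 0" "1 - A * B \<noteq> 0" "1 - Q \<noteq> 0"
  shows "A / (R * (A * B)) * (E * B / (F * ((1 - A * B) / (1 - A))) * (- s / ((1 - A) / (1 - Q))) ^ Suc k)
           * (R * (1 - A * B) / (1 - Q)) * T = - s * (E / F * (- s / ((1 - A) / (1 - Q))) ^ k) * T"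
proof -
  have us: "(- s / ((1 - A) / (1 - Q))) * ((1 - A) / (1 - Q)) = - s" using assms by simp
  show ?thesis
    unfolding alg0[OF assms(1-4) assms(5) assms(6) assms(7)] us ..
qed

theorem mainTheorem15:
  fixes q :: real and p n :: nat and s x :: complex
  assumes "0 < q" "q < 1" "1 \<le> p" "x \<noteq> 0"
  shows "s * ((qderiv (of_real q) ^^ p) (\<lambda>y. qHermite n p y s (of_real q))) x
         - of_real (q powi (int p - int n)) * x
             * qderiv (of_real q) (\<lambda>y. qHermite n p y s (of_real q)) x
         + of_real (q powi (int p - int n)) * qnum (of_real q) n * qHermite n p x s (of_real q)
         = 0"
proof -
  define Q :: complex where "Q = of_real q"
  have Q0: "Q \<noteq> 0" using assms by (simp add: Q_def)
  have Qpow1: "Q ^ j \<noteq> 1" if "j \<ge> 1" for j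
  proof
    assume "Q ^ j = 1"
    then have "norm (Q ^ j) = 1" by simp
    moreover have "norm (Q ^ j) = q ^ j" using assms by (simp add: Q_def norm_power)
    moreover have "q ^ j < 1" using assms that by (simp add: power_less_one_iff)
    ultimately show False by simp
  qed
  have Q1: "Q \<noteq> 1" using Qpow1[of 1] by simp
  define a where "a k = Q ^ (p * (k * (k - 1) div 2)) / qfact (Q ^ p) k * (- s / qnum Q p) ^ k" for k
  define T where "T k = ff Q n (p * k) * x ^ (n - p * k)" for k
  define c where "c = Q ^ p / Q ^ n"
  have c: "of_real (q powi (int p - int n)) = c"
    using assms by (simp add: c_def Q_def power_int_diff)
  have H: "(\<lambda>y. qHermite n p y s Q) = (\<lambda>y. \<Sum>k\<le>n. a k * (qderiv Q ^^ (p * k)) (\<lambda>y. y ^ n) y)"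
    by (simp add: qHermite_def a_def)
  have E1: "((qderiv Q ^^ p) (\<lambda>y. qHermite n p y s Q)) x = (\<Sum>k\<le>n. a k * T (Suc k))"
  proof -
    have "(qderiv Q ^^ p) ((qderiv Q ^^ (p * k)) (\<lambda>y. y ^ n)) = (qderiv Q ^^ (p * Suc k)) (\<lambda>y. y ^ n)" for k
      by (simp only: mult_Suc_right funpow_add comp_apply)
    then show ?thesis unfolding H qderiv_sum_iter
      by (simp add: D1[OF Q0 Q1 assms(4)] T_def del: mult_Suc_right)
  qed
  have step: "x * (ff Q n (Suc m) * x ^ (n - Suc m)) = qnum Q (n - m) * (ff Q n m * x ^ (n - m))" for m
  proof (cases "n - m")
    case (Suc r)
    then have "n - Suc m = r" by simp
    then show ?thesis using Suc by (simp add: ff_Suc)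
  qed (simp add: ff_Suc)
  have E2: "x * qderiv Q (\<lambda>y. qHermite n p y s Q) x = (\<Sum>k\<le>n. a k * qnum Q (n - p * k) * T k)"
  proof -
    have "qderiv Q (\<lambda>y. qHermite n p y s Q) x = ((qderiv Q ^^ 1) (\<lambda>y. qHermite n p y s Q)) x" by simp
    also have "\<dots> = (\<Sum>k\<le>n. a k * ((qderiv Q ^^ Suc (p * k)) (\<lambda>y. y ^ n)) x)"
      unfolding H qderiv_sum_iter by simp
    finally have "x * qderiv Q (\<lambda>y. qHermite n p y s Q) x
       = (\<Sum>k\<le>n. a k * (x * ((qderiv Q ^^ Suc (p * k)) (\<lambda>y. y ^ n)) x))"
      by (simp add: sum_distrib_left algebra_simps)
    also have "\<dots> = (\<Sum>k\<le>n. a k * qnum Q (n - p * k) * T k)"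
      by (rule sum.cong) (simp_all only: D1[OF Q0 Q1 assms(4)] step T_def mult.assoc)
    finally show ?thesis .
  qed
  have E3: "qHermite n p x s Q = (\<Sum>k\<le>n. a k * T k)"
    by (simp add: H[THEN fun_cong] D1[OF Q0 Q1 assms(4)] T_def)
  have qfnz: "qfact (Q ^ p) k \<noteq> 0" for k
    unfolding qfact_def using Qpow1 assms(3)
    by (auto simp: qnum_def power_mult[symmetric])
  have K: "c * a (Suc k) * (qnum Q n - qnum Q (n - p * Suc k)) * T (Suc k) = - s * a k * T (Suc k)" for k
  proof (cases "n < p * Suc k")
    case True then show ?thesis by (simp add: T_def ff_zero)
  next
    case False
    define m where "m = p * Suc k"
    have mn: "m \<le> n" using False m_def by simp
    have m: "Q ^ m = Q ^ p * Q ^ (p * k)" by (simp add: m_def power_add)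
    have nm: "Q ^ n = Q ^ (n - m) * Q ^ m" using mn by (simp add: power_add[symmetric])
    have "1 - Q ^ m \<noteq> 0" using Qpow1[of m] assms(3) m_def by simp
    moreover have "1 - Q ^ p \<noteq> 0" using Qpow1[of p] assms(3) by simp
    moreover have "1 - Q \<noteq> 0" using Q1 by simp
    moreover have "qfact (Q ^ p) k \<noteq> 0" by (rule qfnz)
    moreover have ex: "Q ^ (p * (Suc k * k div 2)) = Q ^ (p * (k * (k - 1) div 2)) * Q ^ (p * k)"
      by (simp only: tri add_mult_distrib2 power_add)
    note nz = calculation
    have cc: "c = Q ^ p / (Q ^ (n - m) * (Q ^ p * Q ^ (p * k)))" by (simp add: c_def nm m)
    have a1: "a (Suc k) = Q ^ (p * (k * (k - 1) div 2)) * Q ^ (p * k) / (qfact (Q ^ p) k * ((1 - Q ^ p * Q ^ (p * k)) / (1 - Q ^ p)))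
          * (- s / ((1 - Q ^ p) / (1 - Q))) ^ Suc k"
      unfolding a_def qfact_Suc ex
      by (simp only: qnum_def power_mult[symmetric] m_def[symmetric] m diff_Suc_1 ex)
    have a0: "a k = Q ^ (p * (k * (k - 1) div 2)) / qfact (Q ^ p) k * (- s / ((1 - Q ^ p) / (1 - Q))) ^ k"
      unfolding a_def qnum_def ..
    have dq: "qnum Q n - qnum Q (n - p * Suc k) = Q ^ (n - m) * (1 - Q ^ p * Q ^ (p * k)) / (1 - Q)"
      unfolding qnum_def m_def[symmetric] nm m
      by (simp only: diff_divide_distrib[symmetric]) (simp add: algebra_simps)
    have eq: "?thesis = (Q ^ p / (Q ^ (n - m) * (Q ^ p * Q ^ (p * k))) *
        (Q ^ (p * (k * (k - 1) div 2)) * Q ^ (p * k) / (qfact (Q ^ p) k * ((1 - Q ^ p * Q ^ (p * k)) / (1 - Q ^ p)))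
          * (- s / ((1 - Q ^ p) / (1 - Q))) ^ Suc k)
           * (Q ^ (n - m) * (1 - Q ^ p * Q ^ (p * k)) / (1 - Q)) * T (Suc k) = - s * (Q ^ (p * (k * (k - 1) div 2)) / qfact (Q ^ p) k * (- s / ((1 - Q ^ p) / (1 - Q))) ^ k) * T (Suc k))"
      by (simp only: cc a1 a0 dq)
    moreover have "1 - Q ^ p * Q ^ (p * k) \<noteq> 0" using \<open>1 - Q ^ m \<noteq> 0\<close> m by simp
    then show ?thesis unfolding eq
      using alg[of "Q ^ p" "Q ^ (p * k)" "Q ^ (n - m)" "qfact (Q ^ p) k" Q] Q0 qfnz \<open>1 - Q ^ p \<noteq> 0\<close> \<open>1 - Q \<noteq> 0\<close>
      by simp
  qed
  have Tn: "T (Suc n) = 0"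
  proof -
    have "n < p * Suc n" using assms(3) by (metis le_add1 less_le_trans lessI mult.commute mult_le_mono1 mult_1)
    then show ?thesis unfolding T_def by (simp only: ff_zero) simp
  qed
  have S1: "(\<Sum>k\<le>n. a k * T (Suc k)) = (\<Sum>k<n. a k * T (Suc k))"
    by (simp add: lessThan_Suc_atMost[symmetric] Tn)
  have S2: "(\<Sum>k\<le>n. c * a k * (qnum Q n - qnum Q (n - p * k)) * T k) = (\<Sum>k<n. - s * a k * T (Suc k))"
    by (simp only: sum.atMost_shift K) simp
  have "s * (\<Sum>k\<le>n. a k * T (Suc k)) - c * (\<Sum>k\<le>n. a k * qnum Q (n - p * k) * T k)
      + c * qnum Q n * (\<Sum>k\<le>n. a k * T k)
      = s * (\<Sum>k\<le>n. a k * T (Suc k)) + (\<Sum>k\<le>n. c * a k * (qnum Q n - qnum Q (n - p * k)) * T k)"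
    by (simp add: sum_distrib_left sum_subtractf algebra_simps)
  also have "\<dots> = 0" unfolding S1 S2 by (simp add: sum_distrib_left sum_negf mult.assoc)
  finally have fin: "s * (\<Sum>k\<le>n. a k * T (Suc k)) - c * (\<Sum>k\<le>n. a k * qnum Q (n - p * k) * T k)
      + c * qnum Q n * (\<Sum>k\<le>n. a k * T k) = 0" .
  show ?thesis
    unfolding Q_def[symmetric] c mult.assoc[of c x] E1 E2 E3 using fin by (simp add: mult.assoc)
qed

end
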